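(* Let $G$ be a divisible abelian group (in particular $G$ is nontrivial). Then $Spec_R(G)=\{1,\infty\}$.
   Context: A group $G$ is divisible if for every $x\in G$ and every positive integer $k$ there is $y\in G$ with $y^k=x$ (here the trivial group is excluded, so divisible groups are infinite). For an endomorphism $\varphi$ of $G$, $x,y$ are $\varphi$-conjugated if $x=zy\varphi(z)^{-1}$ for some $z\in G$; $R(\varphi)\in\mathbb{N}\cup\{\infty\}$ is the number of $\varphi$-conjugacy classes (all infinite cardinals identified with $\infty$). $Spec_R(G)=\{R(\varphi)\mid\varphi\in{\rm Aut}(G)\}$. *)

theory Defs
  imports "HOL-Algebra.Group" "HOL-Library.Extended_Nat"
begin

definition divisible_group :: "('a, 'b) monoid_scheme \<Rightarrow> bool" where
  "divisible_group G \<longleftrightarrow> group G \<and> carrier G \<noteq> {\<one>\<^bsub>G\<^esub>} \<and>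
     (\<forall>x \<in> carrier G. \<forall>k::nat. k > 0 \<longrightarrow> (\<exists>y \<in> carrier G. y [^]\<^bsub>G\<^esub> k = x))"

definition twisted_conj :: "('a, 'b) monoid_scheme \<Rightarrow> ('a \<Rightarrow> 'a) \<Rightarrow> ('a \<times> 'a) set" where
  "twisted_conj G \<phi> = {(x, y). x \<in> carrier G \<and> y \<in> carrier G \<and>
     (\<exists>z \<in> carrier G. x = z \<otimes>\<^bsub>G\<^esub> y \<otimes>\<^bsub>G\<^esub> inv\<^bsub>G\<^esub> (\<phi> z))}"

definition reidemeister_number :: "('a, 'b) monoid_scheme \<Rightarrow> ('a \<Rightarrow> 'a) \<Rightarrow> enat" where
  "reidemeister_number G \<phi> =
     (let C = carrier G // twisted_conj G \<phi> in if finite C then enat (card C) else \<infinity>)"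

definition reidemeister_spectrum :: "('a, 'b) monoid_scheme \<Rightarrow> enat set" where
  "reidemeister_spectrum G = {reidemeister_number G \<phi> | \<phi>. \<phi> \<in> iso G G}"

end

theory Submission
  imports Defs
begin

context comm_group
begin

lemma psi_mult:
  assumes h: "\<phi> \<in> hom G G" and a: "a \<in> carrier G" and b: "b \<in> carrier G"
  shows "(a \<otimes> b) \<otimes> inv (\<phi> (a \<otimes> b)) = (a \<otimes> inv (\<phi> a)) \<otimes> (b \<otimes> inv (\<phi> b))"
proof -
  have pa: "\<phi> a \<in> carrier G" and pb: "\<phi> b \<in> carrier G" using h a b by (auto simp: hom_def)
  have "\<phi> (a \<otimes> b) = \<phi> a \<otimes> \<phi> b" using h a b by (simp add: hom_def)
  then show ?thesis using pa pb a b by (simp add: inv_mult m_ac)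
qed

lemma psi_one:
  assumes h: "\<phi> \<in> hom G G"
  shows "\<one> \<otimes> inv (\<phi> \<one>) = \<one>"
proof -
  have "group_hom G G \<phi>" using h by (simp add: group_hom_def group_hom_axioms_def is_group)
  then have "\<phi> \<one> = \<one>" by (simp add: group_hom.hom_one)
  then show ?thesis by simp
qed

lemma psi_pow:
  assumes h: "\<phi> \<in> hom G G" and a: "a \<in> carrier G"
  shows "(a \<otimes> inv (\<phi> a)) [^] (m::nat) = (a [^] m) \<otimes> inv (\<phi> (a [^] m))"
proof (induction m)
  case 0
  then show ?case using psi_one[OF h] by simp
next
  case (Suc m)
  have "(a [^] m \<otimes> a) \<otimes> inv (\<phi> (a [^] m \<otimes> a)) =
        (a [^] m \<otimes> inv (\<phi> (a [^] m))) \<otimes> (a \<otimes> inv (\<phi> a))"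
    by (rule psi_mult[OF h]) (use a in auto)
  then show ?case using Suc by simp
qed

lemma psi_inv:
  assumes h: "\<phi> \<in> hom G G" and a: "a \<in> carrier G"
  shows "inv a \<otimes> inv (\<phi> (inv a)) = inv (a \<otimes> inv (\<phi> a))"
proof -
  have "group_hom G G \<phi>" using h by (simp add: group_hom_def group_hom_axioms_def is_group)
  then have "\<phi> (inv a) = inv (\<phi> a)" using a by (simp add: group_hom.hom_inv)
  moreover have "\<phi> a \<in> carrier G" using h a by (auto simp: hom_def)
  ultimately show ?thesis using a by (simp add: inv_mult)
qed

lemma rel_iff:
  assumes h: "\<phi> \<in> hom G G" and x: "x \<in> carrier G" and y: "y \<in> carrier G"
  shows "(x, y) \<in> twisted_conj G \<phi> \<longleftrightarrow> (\<exists>z\<in>carrier G. x \<otimes> inv y = z \<otimes> inv (\<phi> z))"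
proof -
  have eq: "x = z \<otimes> y \<otimes> inv (\<phi> z) \<longleftrightarrow> x \<otimes> inv y = z \<otimes> inv (\<phi> z)" if z: "z \<in> carrier G" for z
  proof -
    have pz: "\<phi> z \<in> carrier G" using h z by (auto simp: hom_def)
    have "x = z \<otimes> y \<otimes> inv (\<phi> z) \<longleftrightarrow> x \<otimes> inv y = (z \<otimes> y \<otimes> inv (\<phi> z)) \<otimes> inv y"
      using x y z pz by (metis inv_closed m_closed right_cancel)
    also have "(z \<otimes> y \<otimes> inv (\<phi> z)) \<otimes> inv y = z \<otimes> inv (\<phi> z)"
    proof -
      have "(z \<otimes> y \<otimes> inv (\<phi> z)) \<otimes> inv y = (y \<otimes> (z \<otimes> inv (\<phi> z))) \<otimes> inv y"
        using y z pz by (simp add: m_comm[of z y] m_assoc)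
      also have "\<dots> = inv y \<otimes> (y \<otimes> (z \<otimes> inv (\<phi> z)))"
        using y z pz by (intro m_comm) auto
      also have "\<dots> = z \<otimes> inv (\<phi> z)"
        using y z pz by (simp add: m_assoc[symmetric])
      finally show ?thesis .
    qed
    finally show ?thesis .
  qed
  show ?thesis unfolding twisted_conj_def using x y eq by auto
qed

lemma rel_equiv:
  assumes h: "\<phi> \<in> hom G G"
  shows "equiv (carrier G) (twisted_conj G \<phi>)"
proof (rule equivI)
  show "twisted_conj G \<phi> \<subseteq> carrier G \<times> carrier G" by (auto simp: twisted_conj_def)
  show "refl_on (carrier G) (twisted_conj G \<phi>)"
  proof (rule refl_onI)
    fix x assume x: "x \<in> carrier G"
    show "(x, x) \<in> twisted_conj G \<phi>"
      using rel_iff[OF h x x] psi_one[OF h] x by (metis one_closed r_inv)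
  qed
  show "sym (twisted_conj G \<phi>)"
  proof (rule symI)
    fix x y assume r: "(x, y) \<in> twisted_conj G \<phi>"
    then have x: "x \<in> carrier G" and y: "y \<in> carrier G" by (auto simp: twisted_conj_def)
    then obtain z where z: "z \<in> carrier G" "x \<otimes> inv y = z \<otimes> inv (\<phi> z)" using rel_iff[OF h x y] r by auto
    have "y \<otimes> inv x = inv (x \<otimes> inv y)" using x y by (simp add: inv_mult m_comm)
    also have "\<dots> = inv z \<otimes> inv (\<phi> (inv z))" using z psi_inv[OF h z(1)] by simp
    finally show "(y, x) \<in> twisted_conj G \<phi>" using rel_iff[OF h y x] z by auto
  qed
  show "trans (twisted_conj G \<phi>)"
  proof (rule transI)
    fix x y u assume r1: "(x, y) \<in> twisted_conj G \<phi>" and r2: "(y, u) \<in> twisted_conj G \<phi>"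
    then have x: "x \<in> carrier G" and y: "y \<in> carrier G" and u: "u \<in> carrier G" by (auto simp: twisted_conj_def)
    obtain z where z: "z \<in> carrier G" "x \<otimes> inv y = z \<otimes> inv (\<phi> z)" using rel_iff[OF h x y] r1 by auto
    obtain w where w: "w \<in> carrier G" "y \<otimes> inv u = w \<otimes> inv (\<phi> w)" using rel_iff[OF h y u] r2 by auto
    have "x \<otimes> inv u = (x \<otimes> inv y) \<otimes> (y \<otimes> inv u)" using x y u by (simp add: m_assoc[symmetric]) (simp add: m_assoc)
    also have "\<dots> = (z \<otimes> w) \<otimes> inv (\<phi> (z \<otimes> w))" using z w psi_mult[OF h z(1) w(1)] by simp
    finally show "(x, u) \<in> twisted_conj G \<phi>" using rel_iff[OF h x u] z w by auto
  qed
qed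

lemma all_rel_one:
  assumes h: "\<phi> \<in> hom G G"
    and div: "\<forall>x \<in> carrier G. \<forall>k::nat. k > 0 \<longrightarrow> (\<exists>y \<in> carrier G. y [^] k = x)"
    and fin: "finite (carrier G // twisted_conj G \<phi>)"
    and x: "x \<in> carrier G"
  shows "(x, \<one>) \<in> twisted_conj G \<phi>"
proof -
  let ?r = "twisted_conj G \<phi>"
  let ?C = "carrier G // ?r"
  define n where "n = card ?C"
  have fp: "fact n > (0::nat)" by simp
  obtain y where y: "y \<in> carrier G" "y [^] (fact n :: nat) = x" using div x fp by blast
  define f where "f i = ?r `` {y [^] (i::nat)}" for i
  have sub: "f ` {0..n} \<subseteq> ?C" unfolding f_def using y by (auto intro: quotientI)
  have ninj: "\<not> inj_on f {0..n}"
  proof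
    assume "inj_on f {0..n}"
    then have "card {0..n} \<le> card ?C" using card_inj_on_le[OF _ sub fin] by blast
    then show False by (simp add: n_def)
  qed
  have "\<exists>a\<in>{0..n}. \<exists>b\<in>{0..n}. a \<noteq> b \<and> f a = f b"
    using ninj by (metis inj_onI)
  then obtain a b where ab: "a \<in> {0..n}" "b \<in> {0..n}" "a \<noteq> b" "f a = f b"
    by blast
  define i where "i = min a b"
  define j where "j = max a b"
  have ij1: "i \<in> {0..n}" using ab(1,2) by (simp add: i_def min_def)
  have ij2: "j \<in> {0..n}" using ab(1,2) by (simp add: j_def max_def)
  have ij3: "i < j" using ab(3) by (simp add: i_def j_def min_def max_def)
  have ij4: "f i = f j" using ab(4) by (cases "a \<le> b") (simp_all add: i_def j_def min_def max_def)
  note ij = ij1 ij2 ij3 ij4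
  have yjc: "y [^] j \<in> carrier G" and yic: "y [^] i \<in> carrier G" using y by auto
  have e: "?r `` {y [^] j} = ?r `` {y [^] i}" using ij(4) unfolding f_def by (rule sym)
  have "(y [^] j, y [^] i) \<in> ?r"
    using eq_equiv_class_iff[OF rel_equiv[OF h] yjc yic] e by (rule iffD1)
  then have "\<exists>z\<in>carrier G. y [^] j \<otimes> inv (y [^] i) = z \<otimes> inv (\<phi> z)"
    using rel_iff[OF h yjc yic] by blast
  then obtain z where z: "z \<in> carrier G" "y [^] j \<otimes> inv (y [^] i) = z \<otimes> inv (\<phi> z)"
    by blast
  define k where "k = j - i"
  have yj: "y [^] j = y [^] k \<otimes> y [^] i" using ij(3) y nat_pow_mult[of y k i] by (simp add: k_def)
  have "y [^] j \<otimes> inv (y [^] i) = y [^] k" using y by (simp add: yj m_assoc)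
  with z have yk: "y [^] k = z \<otimes> inv (\<phi> z)" by simp
  have "k dvd fact n" using ij unfolding k_def by (intro dvd_fact) auto
  then obtain m where m: "fact n = k * m" by blast
  have "x = y [^] (k * m)" using y(2) m by simp
  also have "\<dots> = (y [^] k) [^] m" using y(1) by (simp add: nat_pow_pow)
  also have "\<dots> = z [^] m \<otimes> inv (\<phi> (z [^] m))" using yk psi_pow[OF h z(1)] by simp
  finally have "x \<otimes> inv \<one> = z [^] m \<otimes> inv (\<phi> (z [^] m))" using x by simp
  moreover have "z [^] m \<in> carrier G" using z(1) by simp
  ultimately have "\<exists>w\<in>carrier G. x \<otimes> inv \<one> = w \<otimes> inv (\<phi> w)" by blast
  then show ?thesis using rel_iff[OF h x one_closed] by (rule iffD2[rotated])
qed

lemma quotient_single: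
  assumes h: "\<phi> \<in> hom G G"
    and all: "\<And>x. x \<in> carrier G \<Longrightarrow> (x, \<one>) \<in> twisted_conj G \<phi>"
  shows "carrier G // twisted_conj G \<phi> = {twisted_conj G \<phi> `` {\<one>}}"
proof -
  have cl: "twisted_conj G \<phi> `` {x} = twisted_conj G \<phi> `` {\<one>}" if "x \<in> carrier G" for x
    using eq_equiv_class_iff[OF rel_equiv[OF h] that one_closed] all[OF that] by (rule iffD2)
  show ?thesis
  proof
    show "carrier G // twisted_conj G \<phi> \<subseteq> {twisted_conj G \<phi> `` {\<one>}}"
    proof
      fix c assume "c \<in> carrier G // twisted_conj G \<phi>"
      then obtain x where "x \<in> carrier G" "c = twisted_conj G \<phi> `` {x}" by (rule quotientE)
      then show "c \<in> {twisted_conj G \<phi> `` {\<one>}}" using cl by blast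
    qed
    show "{twisted_conj G \<phi> `` {\<one>}} \<subseteq> carrier G // twisted_conj G \<phi>"
      using quotientI[OF one_closed] by blast
  qed
qed

lemma main:
  assumes "divisible_group G"
  shows "reidemeister_spectrum G = {1, \<infinity>}"
proof -
  have div: "\<forall>x \<in> carrier G. \<forall>k::nat. k > 0 \<longrightarrow> (\<exists>y \<in> carrier G. y [^] k = x)"
    and nt: "carrier G \<noteq> {\<one>}" using assms by (auto simp: divisible_group_def)
  have sub: "reidemeister_number G \<phi> \<in> {1, \<infinity>}" if h: "\<phi> \<in> hom G G" for \<phi>
  proof (cases "finite (carrier G // twisted_conj G \<phi>)")
    case True
    then have "carrier G // twisted_conj G \<phi> = {twisted_conj G \<phi> `` {\<one>}}"
      using quotient_single[OF h] all_rel_one[OF h div] by blast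
    then show ?thesis by (simp add: reidemeister_number_def one_enat_def)
  next
    case False
    then show ?thesis by (simp add: reidemeister_number_def)
  qed
  have iso_inv: "(\<lambda>x. inv x) \<in> iso G G"
  proof -
    have "(\<lambda>x. inv x) \<in> hom G G" by (auto simp: hom_def inv_mult)
    moreover have "bij_betw (\<lambda>x. inv x) (carrier G) (carrier G)"
      by (rule bij_betwI[where g = "\<lambda>x. inv x"]) auto
    ultimately show ?thesis by (simp add: iso_def)
  qed
  have h_inv: "(\<lambda>x. inv x) \<in> hom G G" using iso_inv by (simp add: iso_def)
  have one: "reidemeister_number G (\<lambda>x. inv x) = 1"
  proof -
    have "(x, \<one>) \<in> twisted_conj G (\<lambda>x. inv x)" if x: "x \<in> carrier G" for x
    proof -
      have two: "(2::nat) > 0" by simp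
      obtain z where z: "z \<in> carrier G" "z [^] (2::nat) = x" using div x two by blast
      have "x \<otimes> inv \<one> = z \<otimes> inv (inv z)" using z x by (simp add: numeral_2_eq_2)
      then show ?thesis using rel_iff[OF h_inv x one_closed] z by auto
    qed
    then have "carrier G // twisted_conj G (\<lambda>x. inv x) = {twisted_conj G (\<lambda>x. inv x) `` {\<one>}}"
      using quotient_single[OF h_inv] by blast
    then show ?thesis by (simp add: reidemeister_number_def one_enat_def)
  qed
  have h_id: "(\<lambda>x. x) \<in> hom G G" using iso_set_refl[of G] by (simp add: iso_def)
  have inf: "reidemeister_number G (\<lambda>x. x) = \<infinity>"
  proof (cases "finite (carrier G // twisted_conj G (\<lambda>x. x))")
    case True
    have "x = \<one>" if x: "x \<in> carrier G" for x
    proof -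
      obtain z where z: "z \<in> carrier G" "x \<otimes> inv \<one> = z \<otimes> inv z"
        using all_rel_one[OF h_id div True x] rel_iff[OF h_id x one_closed] by auto
      then show ?thesis using x by simp
    qed
    then have "carrier G = {\<one>}" by auto
    with nt show ?thesis by simp
  next
    case False
    then show ?thesis by (simp add: reidemeister_number_def)
  qed
  show ?thesis
  proof
    show "reidemeister_spectrum G \<subseteq> {1, \<infinity>}"
      unfolding reidemeister_spectrum_def using sub by (auto simp: iso_def)
    show "{1, \<infinity>} \<subseteq> reidemeister_spectrum G"
    proof -
      have "1 \<in> reidemeister_spectrum G"
        unfolding reidemeister_spectrum_def using one[symmetric] iso_inv by blast
      moreover have "\<infinity> \<in> reidemeister_spectrum G"
        unfolding reidemeister_spectrum_def using inf[symmetric] iso_set_refl[of G] by blast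
      ultimately show ?thesis by blast
    qed
  qed
qed

end

theorem proposition3:
  fixes G :: "('a, 'b) monoid_scheme"
  assumes "comm_group G" and "divisible_group G"
  shows "reidemeister_spectrum G = {1, \<infinity>}"
  using comm_group.main[OF assms] .

end
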